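(* Let $X$ be a Banach algebra. Let $\phi,\psi:X^2\to[0,\infty)$ and $f:X\to X$ with $f(0)=0$ satisfy $$\|f(xyx)-f(x)yx-xf(y)x-xyf(x)\|\le\psi(x,y),$$ $$\|f(2x+y)+f(x+2y)-f(3x)-f(3y)\|\le\phi(x,y)$$ for all $x,y\in X$. Assume there exists $0<L<1$ such that for all $x,y\in X$ $$\tfrac12\phi(2x,2y)\le L\phi(x,y),\qquad \lim_{k\to\infty}8^{-k}\psi(2^kx,2^ky)=0.$$ Then there exists a unique Jordan triple derivation $H:X\to X$ such that $$\|f(x)-H(x)\|\le\frac{1}{2-2L}\Phi(x)\quad\text{for all }x\in X,$$ where $\Phi(x)=\phi(\tfrac x2,0)+\phi(-\tfrac x2,0)+\phi(\tfrac x2,-\tfrac x2)+\phi(-\tfrac x3,\tfrac{2x}{3})$.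
   Context: A Jordan triple derivation on an algebra $X$ is an additive map $D:X\to X$ with $D(xyx)=D(x)yx+xD(y)x+xyD(x)$ for all $x,y\in X$. *)

theory Defs
  imports "HOL-Analysis.Analysis"
begin

definition additive_map :: "('a::ab_group_add \<Rightarrow> 'a) \<Rightarrow> bool" where
  "additive_map D \<longleftrightarrow> (\<forall>x y. D (x + y) = D x + D y)"

definition jordan_triple_derivation :: "('a::ring \<Rightarrow> 'a) \<Rightarrow> bool" where
  "jordan_triple_derivation D \<longleftrightarrow> additive_map D \<and>
     (\<forall>x y. D (x * y * x) = D x * y * x + x * D y * x + x * y * D x)"

end

theory Submission imports Defs begin

lemma norm4: fixes A B C D :: "'a::real_normed_vector"
  shows "norm (A + B - C + D) \<le> norm A + norm B + norm C + norm D"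
  by (smt (verit) norm_triangle_ineq norm_triangle_ineq4)

lemma key_lemma:
  fixes f :: "'a::{banach, real_normed_algebra} \<Rightarrow> 'a"
    and \<phi> :: "'a \<Rightarrow> 'a \<Rightarrow> real"
  assumes f0: "f 0 = 0"
    and h_phi: "\<And>x y. norm (f (2 *\<^sub>R x + y) + f (x + 2 *\<^sub>R y) - f (3 *\<^sub>R x) - f (3 *\<^sub>R y)) \<le> \<phi> x y"
  shows "norm (2 *\<^sub>R f x - f (2 *\<^sub>R x)) \<le> \<phi> ((1/2) *\<^sub>R x) 0 + \<phi> (- ((1/2) *\<^sub>R x)) 0
               + \<phi> ((1/2) *\<^sub>R x) (- ((1/2) *\<^sub>R x))
               + \<phi> (- ((1/3) *\<^sub>R x)) ((2/3) *\<^sub>R x)"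
proof -
  have p1: "norm (f x + f ((1/2) *\<^sub>R x) - f ((3/2) *\<^sub>R x)) \<le> \<phi> ((1/2) *\<^sub>R x) 0"
    using h_phi[of "(1/2) *\<^sub>R x" 0] by (simp add: f0)
  have p2: "norm (f (-x) + f (-((1/2) *\<^sub>R x)) - f (-((3/2) *\<^sub>R x))) \<le> \<phi> (-((1/2) *\<^sub>R x)) 0"
    using h_phi[of "-((1/2) *\<^sub>R x)" 0] by (simp add: f0)
  have p3: "norm (f ((1/2) *\<^sub>R x) + f (-((1/2) *\<^sub>R x)) - f ((3/2) *\<^sub>R x) - f (-((3/2) *\<^sub>R x))) \<le> \<phi> ((1/2) *\<^sub>R x) (-((1/2) *\<^sub>R x))"
  proof -
    have "2 *\<^sub>R ((1/2) *\<^sub>R x) + - ((1/2) *\<^sub>R x) = (1/2) *\<^sub>R x"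
      by (simp only: scaleR_scaleR scaleR_minus_right flip: scaleR_add_left scaleR_minus_left; simp)
    moreover have "(1/2) *\<^sub>R x + 2 *\<^sub>R (- ((1/2) *\<^sub>R x)) = - ((1/2) *\<^sub>R x)"
      by (simp only: scaleR_scaleR scaleR_minus_right flip: scaleR_add_left scaleR_minus_left; simp)
    ultimately
    show ?thesis using h_phi[of "(1/2) *\<^sub>R x" "-((1/2) *\<^sub>R x)"] by simp
  qed
  have p4: "norm (f x - f (-x) - f (2 *\<^sub>R x)) \<le> \<phi> (- ((1/3) *\<^sub>R x)) ((2/3) *\<^sub>R x)"
  proof -
    have "2 *\<^sub>R (- ((1/3) *\<^sub>R x)) + (2/3) *\<^sub>R x = 0"
      "- ((1/3) *\<^sub>R x) + 2 *\<^sub>R ((2/3) *\<^sub>R x) = x"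
      by (simp_all add: scaleR_scaleR flip: scaleR_add_left scaleR_minus_left)
    then show ?thesis using h_phi[of "- ((1/3) *\<^sub>R x)" "(2/3) *\<^sub>R x"] by (simp add: f0)
  qed
  have "2 *\<^sub>R f x - f (2 *\<^sub>R x) = (f x + f ((1/2) *\<^sub>R x) - f ((3/2) *\<^sub>R x))
     + (f (-x) + f (-((1/2) *\<^sub>R x)) - f (-((3/2) *\<^sub>R x)))
     - (f ((1/2) *\<^sub>R x) + f (-((1/2) *\<^sub>R x)) - f ((3/2) *\<^sub>R x) - f (-((3/2) *\<^sub>R x)))
     + (f x - f (-x) - f (2 *\<^sub>R x))"
    by (simp add: algebra_simps scaleR_2)
  then show ?thesis using norm4 p1 p2 p3 p4 by (smt (verit))
qed


lemma additive_from_eq: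
  fixes H :: "'a::real_vector \<Rightarrow> 'a"
  assumes H0: "H 0 = 0" and H2: "\<And>x. H (2 *\<^sub>R x) = 2 *\<^sub>R H x"
    and Q: "\<And>a b. H (2 *\<^sub>R a + b) + H (a + 2 *\<^sub>R b) - H (3 *\<^sub>R a) - H (3 *\<^sub>R b) = 0"
  shows "additive_map H"
proof -
  have H3: "H (3 *\<^sub>R x) = 3 *\<^sub>R H x" for x
  proof -
    have "H (2 *\<^sub>R x) + H x - H (3 *\<^sub>R x) = 0" using Q[of x 0] H0 by simp
    then show ?thesis using H2[of x] scaleR_add_left[of 1 2 "H x"] by (simp add: algebra_simps)
  qed
  have R: "H a + H b = H (2 *\<^sub>R a - b) + H (2 *\<^sub>R b - a)" for a b
  proof -
    define a' where "a' = (2/3) *\<^sub>R a - (1/3) *\<^sub>R b"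
    define b' where "b' = (2/3) *\<^sub>R b - (1/3) *\<^sub>R a"
    have e1: "2 *\<^sub>R a' + b' = a" unfolding a'_def b'_def
      by (simp add: algebra_simps flip: scaleR_add_left scaleR_diff_left)
    have e2: "a' + 2 *\<^sub>R b' = b" unfolding a'_def b'_def
      by (simp add: algebra_simps flip: scaleR_add_left scaleR_diff_left)
    have e3: "3 *\<^sub>R a' = 2 *\<^sub>R a - b" unfolding a'_def
      by (simp add: algebra_simps)
    have e4: "3 *\<^sub>R b' = 2 *\<^sub>R b - a" unfolding b'_def
      by (simp add: algebra_simps)
    show ?thesis using Q[of a' b'] unfolding e1 e2 e3 e4 by (simp add: algebra_simps)
  qed
  have T: "H (x + 2 *\<^sub>R y) + H (x - y) = H x + H (x + y)" for x y
  proof -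
    have "2 *\<^sub>R x - (x + y) = x - y" "2 *\<^sub>R (x + y) - x = x + 2 *\<^sub>R y"
      by (simp_all add: algebra_simps scaleR_2)
    then show ?thesis using R[of x "x + y"] by (simp add: algebra_simps)
  qed
  have J2: "H (x + 2 *\<^sub>R y) + H (x - 2 *\<^sub>R y) = 2 *\<^sub>R H x" for x y
  proof -
    have t1: "H (x + 2 *\<^sub>R y) + H (x - y) - H x - H (x + y) = 0" using T[of x y] by simp
    have t2: "H (x - 2 *\<^sub>R y) + H (x + y) - H x - H (x - y) = 0" using T[of x "-y"] by simp
    have "H (x + 2 *\<^sub>R y) + H (x - 2 *\<^sub>R y) - 2 *\<^sub>R H x =
      (H (x + 2 *\<^sub>R y) + H (x - y) - H x - H (x + y)) + (H (x - 2 *\<^sub>R y) + H (x + y) - H x - H (x - y))"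
      by (simp add: algebra_simps scaleR_2)
    then show ?thesis using t1 t2 by simp
  qed
  have J: "H (x + y) + H (x - y) = 2 *\<^sub>R H x" for x y
    using J2[of x "(1/2) *\<^sub>R y"] by simp
  show ?thesis unfolding additive_map_def
  proof (intro allI)
    fix u v
    have "H u + H v = 2 *\<^sub>R H ((1/2) *\<^sub>R (u + v))"
      using J[of "(1/2) *\<^sub>R (u + v)" "(1/2) *\<^sub>R (u - v)"]
      by (simp add: algebra_simps flip: scaleR_add_left scaleR_diff_left)
    also have "\<dots> = H (u + v)" using H2[of "(1/2) *\<^sub>R (u + v)"] by simp
    finally show "H (u + v) = H u + H v" by simp
  qed
qed


lemma aux_norm: "u = a + s \<Longrightarrow> norm (a - u) = norm (s::'a::real_normed_vector)"
  by (simp add: norm_minus_commute)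

lemma additive_pow2:
  fixes G :: "'a::real_vector \<Rightarrow> 'a"
  assumes "additive_map G"
  shows "G ((2::real) ^ n *\<^sub>R x) = (2::real) ^ n *\<^sub>R G x"
proof (induction n)
  case 0 then show ?case by simp
next
  case (Suc n)
  have "G ((2::real) ^ Suc n *\<^sub>R x) = G (2 ^ n *\<^sub>R x + 2 ^ n *\<^sub>R x)"
    by (simp add: scaleR_2 flip: scaleR_scaleR)
  also have "\<dots> = 2 ^ n *\<^sub>R G x + 2 ^ n *\<^sub>R G x"
    using assms Suc by (simp add: additive_map_def)
  also have "\<dots> = (2::real) ^ Suc n *\<^sub>R G x"
    by (simp add: scaleR_2 flip: scaleR_scaleR)
  finally show ?case .
qed

theorem theorem2p6:
  fixes f :: "'a::{banach, real_normed_algebra} \<Rightarrow> 'a"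
    and \<phi> \<psi> :: "'a \<Rightarrow> 'a \<Rightarrow> real"
    and L :: real
  assumes phi_nonneg: "\<And>x y. \<phi> x y \<ge> 0"
    and psi_nonneg: "\<And>x y. \<psi> x y \<ge> 0"
    and f0: "f 0 = 0"
    and h_psi: "\<And>x y. norm (f (x * y * x) - f x * y * x - x * f y * x - x * y * f x) \<le> \<psi> x y"
    and h_phi: "\<And>x y. norm (f (2 *\<^sub>R x + y) + f (x + 2 *\<^sub>R y) - f (3 *\<^sub>R x) - f (3 *\<^sub>R y)) \<le> \<phi> x y"
    and L_pos: "0 < L" and L_lt1: "L < 1"
    and h_L: "\<And>x y. (1/2) * \<phi> (2 *\<^sub>R x) (2 *\<^sub>R y) \<le> L * \<phi> x y"
    and h_lim: "\<And>x y. (\<lambda>k. \<psi> ((2::real) ^ k *\<^sub>R x) ((2::real) ^ k *\<^sub>R y) / 8 ^ k) \<longlonglongrightarrow> 0"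
  shows "\<exists>!H. jordan_triple_derivation H \<and>
           (\<forall>x. norm (f x - H x) \<le> 1 / (2 - 2 * L) *
              (\<phi> ((1/2) *\<^sub>R x) 0 + \<phi> (- ((1/2) *\<^sub>R x)) 0
               + \<phi> ((1/2) *\<^sub>R x) (- ((1/2) *\<^sub>R x))
               + \<phi> (- ((1/3) *\<^sub>R x)) ((2/3) *\<^sub>R x)))"
proof -
  define Phi where "Phi x = \<phi> ((1/2) *\<^sub>R x) 0 + \<phi> (- ((1/2) *\<^sub>R x)) 0
               + \<phi> ((1/2) *\<^sub>R x) (- ((1/2) *\<^sub>R x))
               + \<phi> (- ((1/3) *\<^sub>R x)) ((2/3) *\<^sub>R x)" for x
  define C where "C = 1 / (2 - 2 * L)"
  have C_pos: "C > 0" using L_lt1 by (simp add: C_def)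
  have Phi_nonneg: "Phi x \<ge> 0" for x using phi_nonneg by (simp add: Phi_def)
  have key: "norm (2 *\<^sub>R f x - f (2 *\<^sub>R x)) \<le> Phi x" for x
    unfolding Phi_def by (rule key_lemma[OF f0 h_phi])
  have phi2: "\<phi> (2 *\<^sub>R a) (2 *\<^sub>R b) \<le> 2 * L * \<phi> a b" for a b
    using h_L[of a b] by simp
  have phiN: "\<phi> ((2::real) ^ n *\<^sub>R a) ((2::real) ^ n *\<^sub>R b) \<le> (2 * L) ^ n * \<phi> a b" for n a b
  proof (induction n)
    case 0 then show ?case by simp
  next
    case (Suc n)
    have "\<phi> ((2::real) ^ Suc n *\<^sub>R a) ((2::real) ^ Suc n *\<^sub>R b)
        = \<phi> (2 *\<^sub>R ((2::real) ^ n *\<^sub>R a)) (2 *\<^sub>R ((2::real) ^ n *\<^sub>R b))" by simp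
    also have "\<dots> \<le> 2 * L * \<phi> ((2::real) ^ n *\<^sub>R a) ((2::real) ^ n *\<^sub>R b)" by (rule phi2)
    also have "\<dots> \<le> 2 * L * ((2 * L) ^ n * \<phi> a b)"
      using Suc L_pos by (intro mult_left_mono) auto
    finally show ?case by simp
  qed
  have Phi2: "Phi (2 *\<^sub>R x) \<le> 2 * L * Phi x" for x
  proof -
    have "\<phi> x 0 \<le> 2 * L * \<phi> ((1/2) *\<^sub>R x) 0" using phi2[of "(1/2) *\<^sub>R x" 0] by simp
    moreover have "\<phi> (-x) 0 \<le> 2 * L * \<phi> (-((1/2) *\<^sub>R x)) 0" using phi2[of "-((1/2) *\<^sub>R x)" 0] by simp
    moreover have "\<phi> x (-x) \<le> 2 * L * \<phi> ((1/2) *\<^sub>R x) (-((1/2) *\<^sub>R x))"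
      using phi2[of "(1/2) *\<^sub>R x" "-((1/2) *\<^sub>R x)"] by simp
    moreover have "\<phi> (- ((2/3) *\<^sub>R x)) ((4/3) *\<^sub>R x) \<le> 2 * L * \<phi> (- ((1/3) *\<^sub>R x)) ((2/3) *\<^sub>R x)"
      using phi2[of "- ((1/3) *\<^sub>R x)" "(2/3) *\<^sub>R x"] by simp
    ultimately show ?thesis by (simp add: Phi_def algebra_simps)
  qed
  have PhiN: "Phi ((2::real) ^ n *\<^sub>R x) \<le> (2 * L) ^ n * Phi x" for n x
  proof (induction n)
    case 0 then show ?case by simp
  next
    case (Suc n)
    have "Phi ((2::real) ^ Suc n *\<^sub>R x) = Phi (2 *\<^sub>R ((2::real) ^ n *\<^sub>R x))" by simp
    also have "\<dots> \<le> 2 * L * Phi ((2::real) ^ n *\<^sub>R x)" by (rule Phi2)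
    also have "\<dots> \<le> 2 * L * ((2 * L) ^ n * Phi x)"
      using Suc L_pos by (intro mult_left_mono) auto
    finally show ?case by simp
  qed
  define u where "u n x = (1 / (2::real) ^ n) *\<^sub>R f ((2::real) ^ n *\<^sub>R x)" for n x
  have u0: "u 0 x = f x" for x by (simp add: u_def)
  have dbound: "norm (u (Suc n) x - u n x) \<le> L ^ n * Phi x / 2" for n x
  proof -
    define y where "y = (2::real) ^ n *\<^sub>R x"
    have "u (Suc n) x - u n x = (1 / 2 ^ Suc n) *\<^sub>R (f (2 *\<^sub>R y) - 2 *\<^sub>R f y)"
      by (simp add: u_def y_def algebra_simps)
    then have "norm (u (Suc n) x - u n x) = (1 / 2 ^ Suc n) * norm (2 *\<^sub>R f y - f (2 *\<^sub>R y))"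
      by (simp add: norm_minus_commute)
    also have "\<dots> \<le> (1 / 2 ^ Suc n) * ((2 * L) ^ n * Phi x)"
      using key[of y] PhiN[of n x] unfolding y_def by (intro mult_left_mono) auto
    also have "\<dots> = L ^ n * Phi x / 2" by (simp add: power_mult_distrib)
    finally show ?thesis .
  qed
  have summ: "summable (\<lambda>n. u (Suc n) x - u n x)" for x
  proof (rule summable_comparison_test)
    show "\<exists>N. \<forall>n\<ge>N. norm (u (Suc n) x - u n x) \<le> L ^ n * Phi x / 2" using dbound by blast
    show "summable (\<lambda>n. L ^ n * Phi x / 2)"
      using L_pos L_lt1 by (intro summable_divide summable_mult2 summable_geometric) simp
  qed
  have telesc: "u n x = f x + (\<Sum>k<n. u (Suc k) x - u k x)" for n x
    using sum_lessThan_telescope[of "\<lambda>k. u k x" n] by (simp add: u0)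
  have conv0: "(\<lambda>n. u n x) \<longlonglongrightarrow> f x + (\<Sum>k. u (Suc k) x - u k x)" for x
  proof -
    have "(\<lambda>n. f x + (\<Sum>k<n. u (Suc k) x - u k x)) \<longlonglongrightarrow> f x + (\<Sum>k. u (Suc k) x - u k x)"
      by (intro tendsto_add tendsto_const summable_LIMSEQ summ)
    then show ?thesis by (simp only: telesc[symmetric])
  qed
  define H where "H x = lim (\<lambda>n. u n x)" for x
  have conv: "(\<lambda>n. u n x) \<longlonglongrightarrow> H x" for x
    unfolding H_def using conv0 convergent_LIMSEQ_iff convergent_def by blast
  have bound: "norm (f x - H x) \<le> C * Phi x" for x
  proof -
    have geo: "(\<Sum>k<n. L ^ k) \<le> 1 / (1 - L)" for n
    proof -
      have "(\<Sum>k<n. L ^ k) \<le> (\<Sum>k. L ^ k)"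
        using L_pos L_lt1 by (intro sum_le_suminf summable_geometric) auto
      also have "\<dots> = 1 / (1 - L)" using L_pos L_lt1 by (simp add: suminf_geometric)
      finally show ?thesis .
    qed
    have "norm (f x - u n x) \<le> C * Phi x" for n
    proof -
      have "norm (f x - u n x) = norm (\<Sum>k<n. u (Suc k) x - u k x)"
        by (rule aux_norm[OF telesc[of n x]])
      also have "\<dots> \<le> (\<Sum>k<n. norm (u (Suc k) x - u k x))" by (rule norm_sum)
      also have "\<dots> \<le> (\<Sum>k<n. L ^ k * Phi x / 2)" by (intro sum_mono dbound)
      also have "\<dots> = (\<Sum>k<n. L ^ k) * (Phi x / 2)" by (simp add: sum_distrib_right)
      also have "\<dots> \<le> 1 / (1 - L) * (Phi x / 2)"
        using geo Phi_nonneg by (intro mult_right_mono) auto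
      also have "\<dots> = C * Phi x" using L_lt1 by (simp add: C_def field_simps)
      finally show ?thesis .
    qed
    moreover have "(\<lambda>n. norm (f x - u n x)) \<longlonglongrightarrow> norm (f x - H x)"
      by (intro tendsto_norm tendsto_diff tendsto_const conv)
    ultimately show ?thesis by (intro LIMSEQ_le_const2) auto
  qed
  have H0: "H 0 = 0"
  proof -
    have "(\<lambda>n. u n 0) \<longlonglongrightarrow> 0" by (simp add: u_def f0)
    then show ?thesis using conv[of 0] LIMSEQ_unique by blast
  qed
  have H2: "H (2 *\<^sub>R x) = 2 *\<^sub>R H x" for x
  proof -
    have "u n (2 *\<^sub>R x) = 2 *\<^sub>R u (Suc n) x" for n by (simp add: u_def) (metis mult.commute)
    moreover have "(\<lambda>n. 2 *\<^sub>R u (Suc n) x) \<longlonglongrightarrow> 2 *\<^sub>R H x"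
      by (intro tendsto_scaleR tendsto_const) (rule LIMSEQ_Suc[OF conv])
    ultimately have "(\<lambda>n. u n (2 *\<^sub>R x)) \<longlonglongrightarrow> 2 *\<^sub>R H x" by simp
    then show ?thesis using conv[of "2 *\<^sub>R x"] LIMSEQ_unique by blast
  qed
  have Lpow0: "(\<lambda>n. L ^ n * c) \<longlonglongrightarrow> 0" for c
    using L_pos L_lt1 by (intro tendsto_mult_left_zero LIMSEQ_power_zero) auto
  have Q: "H (2 *\<^sub>R a + b) + H (a + 2 *\<^sub>R b) - H (3 *\<^sub>R a) - H (3 *\<^sub>R b) = 0" for a b
  proof -
    define E where "E n = u n (2 *\<^sub>R a + b) + u n (a + 2 *\<^sub>R b) - u n (3 *\<^sub>R a) - u n (3 *\<^sub>R b)" for n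
    have E1: "E \<longlonglongrightarrow> H (2 *\<^sub>R a + b) + H (a + 2 *\<^sub>R b) - H (3 *\<^sub>R a) - H (3 *\<^sub>R b)"
      unfolding E_def by (intro tendsto_add tendsto_diff conv)
    have "norm (E n) \<le> L ^ n * \<phi> a b" for n
    proof -
      define a' where "a' = (2::real) ^ n *\<^sub>R a"
      define b' where "b' = (2::real) ^ n *\<^sub>R b"
      have "E n = (1 / 2 ^ n) *\<^sub>R (f (2 *\<^sub>R a' + b') + f (a' + 2 *\<^sub>R b') - f (3 *\<^sub>R a') - f (3 *\<^sub>R b'))"
        unfolding E_def u_def a'_def b'_def by (simp add: algebra_simps)
      then have "norm (E n) = (1 / 2 ^ n) * norm (f (2 *\<^sub>R a' + b') + f (a' + 2 *\<^sub>R b') - f (3 *\<^sub>R a') - f (3 *\<^sub>R b'))"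
        by simp
      also have "\<dots> \<le> (1 / 2 ^ n) * ((2 * L) ^ n * \<phi> a b)"
        using h_phi[of a' b'] phiN[of n a b] unfolding a'_def b'_def by (intro mult_left_mono) auto
      also have "\<dots> = L ^ n * \<phi> a b" by (simp add: power_mult_distrib)
      finally show ?thesis .
    qed
    then have "E \<longlonglongrightarrow> 0"
      by (intro Lim_null_comparison[OF _ Lpow0[of "\<phi> a b"]]) auto
    then show ?thesis using E1 LIMSEQ_unique by blast
  qed
  have addH: "additive_map H" by (rule additive_from_eq[OF H0 H2 Q])
  have jordH: "H (x * y * x) = H x * y * x + x * H y * x + x * y * H x" for x y
  proof -
    define J where "J k = u (3 * k) (x * y * x) - u k x * y * x - x * u k y * x - x * y * u k x" for k
    have sm: "strict_mono (\<lambda>k::nat. 3 * k)" by (simp add: strict_mono_def)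
    have c3: "(\<lambda>k. u (3 * k) (x * y * x)) \<longlonglongrightarrow> H (x * y * x)"
      using LIMSEQ_subseq_LIMSEQ[OF conv sm] by (simp add: o_def)
    have J1: "J \<longlonglongrightarrow> H (x * y * x) - H x * y * x - x * H y * x - x * y * H x"
      unfolding J_def by (intro tendsto_diff tendsto_mult tendsto_const c3 conv)
    have Jeq: "J k = (1 / 8 ^ k) *\<^sub>R (f (X * Y * X) - f X * Y * X - X * f Y * X - X * Y * f X)"
      if "X = (2::real) ^ k *\<^sub>R x" "Y = (2::real) ^ k *\<^sub>R y" for k X Y
    proof -
      have p8: "(8::real) ^ k = 2 ^ k * 2 ^ k * 2 ^ k"
        by (simp flip: power_mult_distrib)
      have p3: "(2::real) ^ (3 * k) = 2 ^ k * 2 ^ k * 2 ^ k"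
        by (simp only: power_mult flip: p8) simp
      have "X * Y * X = (2 ^ (3 * k)) *\<^sub>R (x * y * x)"
        unfolding that p3 by (simp add: mult_scaleR_left mult_scaleR_right)
      then have t1: "(1 / 8 ^ k) *\<^sub>R f (X * Y * X) = u (3 * k) (x * y * x)"
        unfolding u_def p8 p3 by simp
      have t2: "(1 / 8 ^ k) *\<^sub>R (f X * Y * X) = u k x * y * x"
        unfolding u_def that p8 by (simp add: mult_scaleR_left mult_scaleR_right field_simps)
      have t3: "(1 / 8 ^ k) *\<^sub>R (X * f Y * X) = x * u k y * x"
        unfolding u_def that p8 by (simp add: mult_scaleR_left mult_scaleR_right field_simps)
      have t4: "(1 / 8 ^ k) *\<^sub>R (X * Y * f X) = x * y * u k x"
        unfolding u_def that p8 by (simp add: mult_scaleR_left mult_scaleR_right field_simps)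
      show ?thesis unfolding J_def using t1 t2 t3 t4 by (simp add: scaleR_diff_right)
    qed
    have "norm (J k) \<le> \<psi> ((2::real) ^ k *\<^sub>R x) ((2::real) ^ k *\<^sub>R y) / 8 ^ k" for k
      using Jeq[OF refl refl, of k] h_psi[of "(2::real) ^ k *\<^sub>R x" "(2::real) ^ k *\<^sub>R y"]
      by (simp add: divide_right_mono)
    then have "J \<longlonglongrightarrow> 0"
      by (intro Lim_null_comparison[OF _ h_lim[of x y]]) auto
    then have "H (x * y * x) - H x * y * x - x * H y * x - x * y * H x = 0"
      using J1 LIMSEQ_unique by blast
    then show ?thesis by (simp add: algebra_simps)
  qed
  have jtdH: "jordan_triple_derivation H"
    unfolding jordan_triple_derivation_def using addH jordH by blast
  show ?thesis
  proof (rule ex1I[of _ H])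
    show "jordan_triple_derivation H \<and> (\<forall>x. norm (f x - H x) \<le> 1 / (2 - 2 * L) *
              (\<phi> ((1/2) *\<^sub>R x) 0 + \<phi> (- ((1/2) *\<^sub>R x)) 0
               + \<phi> ((1/2) *\<^sub>R x) (- ((1/2) *\<^sub>R x))
               + \<phi> (- ((1/3) *\<^sub>R x)) ((2/3) *\<^sub>R x)))"
      using jtdH bound unfolding Phi_def C_def by blast
  next
    fix H'
    assume H'a: "jordan_triple_derivation H' \<and> (\<forall>x. norm (f x - H' x) \<le> 1 / (2 - 2 * L) *
              (\<phi> ((1/2) *\<^sub>R x) 0 + \<phi> (- ((1/2) *\<^sub>R x)) 0
               + \<phi> ((1/2) *\<^sub>R x) (- ((1/2) *\<^sub>R x))
               + \<phi> (- ((1/3) *\<^sub>R x)) ((2/3) *\<^sub>R x)))"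
    then have addH': "additive_map H'" and bound': "\<And>x. norm (f x - H' x) \<le> C * Phi x"
      unfolding jordan_triple_derivation_def Phi_def C_def by auto
    show "H' = H"
    proof
      fix x
      have le: "norm (H' x - H x) \<le> 2 * C * L ^ n * Phi x" for n
      proof -
        define y where "y = (2::real) ^ n *\<^sub>R x"
        have "H' y - H y = (2::real) ^ n *\<^sub>R (H' x - H x)"
          unfolding y_def additive_pow2[OF addH'] additive_pow2[OF addH] by (simp add: scaleR_diff_right)
        then have "2 ^ n * norm (H' x - H x) = norm (H' y - H y)" by simp
        also have "\<dots> \<le> norm (f y - H' y) + norm (f y - H y)"
        proof -
          have "H' y - H y = (f y - H y) - (f y - H' y)" by simp
          then show ?thesis using norm_triangle_ineq4[of "f y - H y" "f y - H' y"] by simp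
        qed
        also have "\<dots> \<le> 2 * C * Phi y" using bound'[of y] bound[of y] by simp
        also have "\<dots> \<le> 2 * C * ((2 * L) ^ n * Phi x)"
          using PhiN[of n x] C_pos unfolding y_def by (intro mult_left_mono) auto
        finally have "2 ^ n * norm (H' x - H x) \<le> 2 ^ n * (2 * C * L ^ n * Phi x)"
          by (simp add: power_mult_distrib algebra_simps)
        then show ?thesis by simp
      qed
      have lim0: "(\<lambda>n. 2 * C * L ^ n * Phi x) \<longlonglongrightarrow> 0"
        using Lpow0[of "2 * C * Phi x"] by (simp add: algebra_simps)
      have "norm (H' x - H x) \<le> 0"
        by (rule LIMSEQ_le_const[OF lim0]) (use le in auto)
      then show "H' x = H x" by simp
    qed
  qed
qed

end
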